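(* Let $\mathcal G$ be a connected undirected graph on $N$ nodes with unweighted adjacency matrix $\mathbf A$, degree matrix $\mathbf D$, and normalized adjacency $\widehat{\mathbf A}=\mathbf D^{-1/2}\mathbf A\mathbf D^{-1/2}$. For each layer $\ell$, let $\mathbf P_\theta(\ell)=\alpha^{(\ell)}_\theta\,\mathbf v\mathbf v^\top$ where $\alpha^{(\ell)}_\theta\in\mathbb R$ and $\mathbf v=\frac{1}{\sqrt N}\mathbf 1\in\mathbb R^N$, and let $\widehat{\mathbf W}(\ell)\in\mathbb R^{d\times d}$ be antisymmetric, i.e. $\widehat{\mathbf W}(\ell)^\top=-\widehat{\mathbf W}(\ell)$. Consider, with step size $\epsilon>0$, the update $$\mathbf H(\ell+1)=\mathbf H(\ell)+\epsilon\big(\mathbf P_\theta(\ell)\mathbf H(\ell)\widehat{\mathbf W}(\ell)+\widehat{\mathbf A}\mathbf H(\ell)\widehat{\mathbf W}(\ell)\big),\qquad \mathbf H(\ell)\in\mathbb R^{N\times d},$$ and let $\mathbf J(\ell)=\frac{\partial\,\mathrm{vec}(\mathbf H(\ell+1))}{\partial\,\mathrm{vec}(\mathbf H(\ell))}\in\mathbb R^{Nd\times Nd}$. Then the layerwise Jacobian energy is stable (no exponential growth or decay per layer): $\|\mathbf J(\ell)\|_2=1+\mathcal O(\epsilon^2)$.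
   Context: $\mathrm{vec}$ denotes column-stacking vectorization, $\|\cdot\|_2$ is the spectral norm, and $\mathcal O(\epsilon^2)$ refers to $\epsilon\to 0$ with the other quantities ($\widehat{\mathbf A}$, $\mathbf P_\theta(\ell)$, $\widehat{\mathbf W}(\ell)$) fixed. *)

theory Defs
  imports "HOL-Analysis.Analysis" "HOL-Library.Landau_Symbols"
begin

definition is_adjacency :: "real^'n^'n \<Rightarrow> bool" where
  "is_adjacency A \<longleftrightarrow> (\<forall>i j. A$i$j = 0 \<or> A$i$j = 1) \<and> (\<forall>i j. A$i$j = A$j$i) \<and> (\<forall>i. A$i$i = 0)"

definition graph_connected :: "real^'n^'n \<Rightarrow> bool" where
  "graph_connected A \<longleftrightarrow> (\<forall>i j. (i, j) \<in> {(a, b). A$a$b = 1}\<^sup>*)"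

definition degree_mat :: "real^'n^'n \<Rightarrow> real^'n^'n" where
  "degree_mat A = (\<chi> i j. if i = j then (\<Sum>k\<in>UNIV. A$i$k) else 0)"

definition degree_inv_sqrt :: "real^'n^'n \<Rightarrow> real^'n^'n" where
  "degree_inv_sqrt A = (\<chi> i j. if i = j then 1 / sqrt (degree_mat A $ i $ i) else 0)"

definition norm_adj :: "real^'n^'n \<Rightarrow> real^'n^'n" where
  "norm_adj A = degree_inv_sqrt A ** A ** degree_inv_sqrt A"

definition vone :: "real^'n" where
  "vone = (\<chi> i. 1 / sqrt (real CARD('n)))"

definition Pmat :: "real \<Rightarrow> real^'n^'n" where
  "Pmat \<alpha> = \<alpha> *\<^sub>R (\<chi> i j. vone $ i * vone $ j)"

text \<open>Column-stacking vectorization of an N x d matrix: the entry in row i, column j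
  sits at index (j, i); ordering indices lexicographically gives column stacking.\<close>
definition vecm :: "real^'d^'n \<Rightarrow> real^('d \<times> 'n)" where
  "vecm H = (\<chi> p. H $ snd p $ fst p)"

definition unvecm :: "real^('d \<times> 'n) \<Rightarrow> real^'d^'n" where
  "unvecm x = (\<chi> i j. x $ (j, i))"

definition layer_update :: "real \<Rightarrow> real^'n^'n \<Rightarrow> real^'n^'n \<Rightarrow> real^'d^'d \<Rightarrow> real^'d^'n \<Rightarrow> real^'d^'n" where
  "layer_update \<epsilon> P Ahat W H = H + \<epsilon> *\<^sub>R (P ** H ** W + Ahat ** H ** W)"

text \<open>Jacobian matrix d vec(f(H)) / d vec(H) at H (entry (p,q) = d out_p / d in_q).\<close>
definition vec_jacobian :: "(real^'d^'n \<Rightarrow> real^'d^'n) \<Rightarrow> real^'d^'n \<Rightarrow> real^('d \<times> 'n)^('d \<times> 'n)" where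
  "vec_jacobian f H = matrix (frechet_derivative (\<lambda>x. vecm (f (unvecm x))) (at (vecm H)))"

definition spec_norm :: "real^'m^'k \<Rightarrow> real" where
  "spec_norm M = onorm (\<lambda>x. M *v x)"

end

theory Submission
  imports Defs
begin

lemma sw4: fixes g :: "'a::finite \<Rightarrow> 'b::finite \<Rightarrow> 'c::finite \<Rightarrow> 'e::finite \<Rightarrow> real"
  shows "(\<Sum>i\<in>UNIV. \<Sum>j\<in>UNIV. \<Sum>k\<in>UNIV. \<Sum>l\<in>UNIV. g l k j i) = (\<Sum>l\<in>UNIV. \<Sum>k\<in>UNIV. \<Sum>j\<in>UNIV. \<Sum>i\<in>UNIV. g l k j i)"
proof -
  have "(\<Sum>i\<in>UNIV. \<Sum>j\<in>UNIV. \<Sum>k\<in>UNIV. \<Sum>l\<in>UNIV. g l k j i) = (\<Sum>i\<in>UNIV. \<Sum>j\<in>UNIV. \<Sum>l\<in>UNIV. \<Sum>k\<in>UNIV. g l k j i)"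
    by (intro sum.cong refl, rule sum.swap)
  also have "\<dots> = (\<Sum>i\<in>UNIV. \<Sum>l\<in>UNIV. \<Sum>j\<in>UNIV. \<Sum>k\<in>UNIV. g l k j i)"
    by (intro sum.cong refl, rule sum.swap)
  also have "\<dots> = (\<Sum>l\<in>UNIV. \<Sum>i\<in>UNIV. \<Sum>j\<in>UNIV. \<Sum>k\<in>UNIV. g l k j i)"
    by (rule sum.swap)
  also have "\<dots> = (\<Sum>l\<in>UNIV. \<Sum>i\<in>UNIV. \<Sum>k\<in>UNIV. \<Sum>j\<in>UNIV. g l k j i)"
    by (intro sum.cong refl, rule sum.swap)
  also have "\<dots> = (\<Sum>l\<in>UNIV. \<Sum>k\<in>UNIV. \<Sum>i\<in>UNIV. \<Sum>j\<in>UNIV. g l k j i)"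
    by (intro sum.cong refl, rule sum.swap)
  also have "\<dots> = (\<Sum>l\<in>UNIV. \<Sum>k\<in>UNIV. \<Sum>j\<in>UNIV. \<Sum>i\<in>UNIV. g l k j i)"
    by (intro sum.cong refl, rule sum.swap)
  finally show ?thesis .
qed

lemma orth:
  fixes M :: "real^'n^'n" and W :: "real^'d^'d" and X :: "real^'d^'n"
  assumes M: "\<And>i j. M$i$j = M$j$i" and W: "\<And>i j. W$i$j = - W$j$i"
  shows "(\<Sum>i\<in>UNIV. \<Sum>j\<in>UNIV. X$i$j * (M ** X ** W)$i$j) = 0"
proof -
  define f where "f i j k l = X$i$j * M$i$l * X$l$k * W$k$j" for i j k l
  have S: "(\<Sum>i\<in>UNIV. \<Sum>j\<in>UNIV. X$i$j * (M ** X ** W)$i$j) = (\<Sum>i\<in>UNIV. \<Sum>j\<in>UNIV. \<Sum>k\<in>UNIV. \<Sum>l\<in>UNIV. f i j k l)"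
    by (simp add: f_def matrix_matrix_mult_def sum_distrib_left sum_distrib_right mult.assoc)
  have "(\<Sum>i\<in>UNIV. \<Sum>j\<in>UNIV. \<Sum>k\<in>UNIV. \<Sum>l\<in>UNIV. f i j k l) = (\<Sum>i\<in>UNIV. \<Sum>j\<in>UNIV. \<Sum>k\<in>UNIV. \<Sum>l\<in>UNIV. - f l k j i)"
  proof (intro sum.cong refl)
    fix i j k l
    have "M$l$i = M$i$l" "W$j$k = - W$k$j" using M W by blast+
    then show "f i j k l = - f l k j i" unfolding f_def by (simp only:) (simp add: algebra_simps)
  qed
  also have "\<dots> = - (\<Sum>l\<in>UNIV. \<Sum>k\<in>UNIV. \<Sum>j\<in>UNIV. \<Sum>i\<in>UNIV. f l k j i)"
    using sw4[of "\<lambda>l k j i. - f l k j i"] by (simp add: sum_negf)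
  finally show ?thesis using S by simp
qed

lemma vecm_add: "vecm (a + b) = vecm a + vecm b" by (simp add: vecm_def vec_eq_iff)
lemma vecm_scale: "vecm (c *\<^sub>R a) = c *\<^sub>R vecm a" by (simp add: vecm_def vec_eq_iff)
lemma vecm_unvecm: "vecm (unvecm x) = x" by (simp add: vecm_def unvecm_def vec_eq_iff)
lemma unvecm_add: "unvecm (a + b) = unvecm a + unvecm b" by (simp add: unvecm_def vec_eq_iff)
lemma unvecm_scale: "unvecm (c *\<^sub>R a) = c *\<^sub>R unvecm a" by (simp add: unvecm_def vec_eq_iff)
lemma mm_rdist: "(P::real^'n^'n) ** H ** W + Q ** H ** W = (P + Q) ** H ** W"
  by (simp add: vec_eq_iff matrix_matrix_mult_def sum.distrib algebra_simps)
lemma mm_ladd: "(P::real^'n^'n) ** (H1 + H2) ** W = P ** H1 ** W + P ** H2 ** W"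
  by (simp add: vec_eq_iff matrix_matrix_mult_def sum.distrib algebra_simps)
lemma mm_lscale: "(P::real^'n^'n) ** (c *\<^sub>R H) ** W = c *\<^sub>R (P ** H ** W)"
  by (simp add: vec_eq_iff matrix_matrix_mult_def sum_distrib_left algebra_simps)

lemma K_linear: "linear (\<lambda>x::real^('d \<times> 'n). vecm ((M::real^'n^'n) ** unvecm x ** (W::real^'d^'d)))"
  by (rule linearI) (simp_all add: unvecm_add unvecm_scale mm_ladd mm_lscale vecm_add vecm_scale)

lemma K_orth:
  fixes M :: "real^'n^'n" and W :: "real^'d^'d"
  assumes M: "\<And>i j. M$i$j = M$j$i" and W: "\<And>i j. W$i$j = - W$j$i"
  shows "x \<bullet> vecm (M ** unvecm x ** W) = 0"
proof -
  have "x \<bullet> vecm (M ** unvecm x ** W) = (\<Sum>p\<in>UNIV. unvecm x $ snd p $ fst p * (M ** unvecm x ** W) $ snd p $ fst p)"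
    by (simp add: inner_vec_def vecm_def unvecm_def)
  also have "\<dots> = (\<Sum>j\<in>UNIV. \<Sum>i\<in>UNIV. unvecm x $ i $ j * (M ** unvecm x ** W) $ i $ j)"
    by (simp add: UNIV_Times_UNIV[symmetric] sum.cartesian_product case_prod_unfold del: UNIV_Times_UNIV)
  also have "\<dots> = (\<Sum>i\<in>UNIV. \<Sum>j\<in>UNIV. unvecm x $ i $ j * (M ** unvecm x ** W) $ i $ j)"
    by (rule sum.swap)
  also have "\<dots> = 0" by (rule orth[OF M W])
  finally show ?thesis .
qed

lemma normadj_sym: assumes "is_adjacency A" shows "norm_adj A $ i $ j = norm_adj A $ j $ i"
proof -
  have "transpose (norm_adj A) = norm_adj A"
  proof -
    have D: "transpose (degree_inv_sqrt A) = degree_inv_sqrt A"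
      by (simp add: transpose_def degree_inv_sqrt_def vec_eq_iff)
    have AA: "transpose A = A" using assms by (simp add: transpose_def is_adjacency_def vec_eq_iff)
    show ?thesis unfolding norm_adj_def by (simp add: matrix_transpose_mul D AA matrix_mul_assoc)
  qed
  then have "transpose (norm_adj A) $ i $ j = norm_adj A $ i $ j" by simp
  then show ?thesis by (simp add: transpose_def)
qed

lemma spec_lin: assumes "linear f" shows "spec_norm (matrix f) = onorm f"
proof -
  have "(\<lambda>x. matrix f *v x) = f" using assms by (simp add: matrix_works fun_eq_iff)
  then show ?thesis by (simp add: spec_norm_def)
qed

theorem proposition2:
  fixes A :: "real^'n^'n"
    and \<alpha> :: "nat \<Rightarrow> real"
    and W :: "nat \<Rightarrow> real^'d^'d"
    and lay :: nat
    and H :: "real^'d^'n"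
  assumes "is_adjacency A"
    and "graph_connected A"
    and "\<forall>l. transpose (W l) = - W l"
  shows "(\<lambda>\<epsilon>. spec_norm (vec_jacobian (layer_update \<epsilon> (Pmat (\<alpha> lay)) (norm_adj A) (W lay)) H) - 1)
           \<in> O[at_right 0](\<lambda>\<epsilon>. \<epsilon>\<^sup>2)"
proof -
  define M where "M = Pmat (\<alpha> lay) + norm_adj A"
  define Wl where "Wl = W lay"
  define K where "K = (\<lambda>x::real^('d \<times> 'n). vecm (M ** unvecm x ** Wl))"
  have Msym: "\<And>i j. M$i$j = M$j$i"
    using normadj_sym[OF assms(1)] by (simp add: M_def Pmat_def mult.commute)
  have Wanti: "\<And>i j. Wl$i$j = - Wl$j$i"
  proof -
    fix i j
    have "transpose Wl $ j $ i = (- Wl) $ j $ i" using assms(3) by (simp add: Wl_def)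
    then show "Wl$i$j = - Wl$j$i" by (simp add: transpose_def)
  qed
  have Klin: "linear K" unfolding K_def by (rule K_linear)
  have Korth: "\<And>x. x \<bullet> K x = 0" unfolding K_def by (rule K_orth[OF Msym Wanti])
  obtain C where C: "\<And>x. norm (K x) \<le> norm x * C" "C > 0"
    using bounded_linear.pos_bounded[of K] Klin linear_conv_bounded_linear by blast
  have key: "\<bar>spec_norm (vec_jacobian (layer_update \<epsilon> (Pmat (\<alpha> lay)) (norm_adj A) (W lay)) H) - 1\<bar> \<le> C^2 * \<epsilon>^2" for \<epsilon>
  proof -
    define L where "L = (\<lambda>x. vecm (layer_update \<epsilon> (Pmat (\<alpha> lay)) (norm_adj A) (W lay) (unvecm x)))"
    have Leq: "L = (\<lambda>x. x + \<epsilon> *\<^sub>R K x)"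
      by (simp add: L_def K_def layer_update_def fun_eq_iff vecm_add vecm_scale vecm_unvecm mm_rdist M_def Wl_def)
    have Llin: "linear L" unfolding Leq using Klin
      by (intro linearI) (simp_all add: linear_add linear_scale algebra_simps)
    have "frechet_derivative L (at (vecm H)) = L"
      using bounded_linear_imp_has_derivative[of L] Llin linear_conv_bounded_linear frechet_derivative_at by metis
    then have SN: "spec_norm (vec_jacobian (layer_update \<epsilon> (Pmat (\<alpha> lay)) (norm_adj A) (W lay)) H) = onorm L"
      using spec_lin[OF Llin] by (simp add: vec_jacobian_def L_def[symmetric])
    have nsq: "(norm (L x))^2 = (norm x)^2 + \<epsilon>^2 * (norm (K x))^2" for x
    proof -
      have k2: "K x \<bullet> x = 0" using Korth[of x] by (simp add: inner_commute)
      show ?thesis unfolding Leq power2_norm_eq_inner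
        by (simp add: inner_add_left inner_add_right Korth k2 power2_eq_square)
    qed
    have up: "norm (L x) \<le> (1 + C^2 * \<epsilon>^2) * norm x" for x
    proof -
      have "(norm (L x))^2 \<le> (norm x)^2 + \<epsilon>^2 * (norm x * C)^2"
        unfolding nsq using C(1)[of x] by (intro add_left_mono mult_left_mono power_mono) auto
      also have "\<dots> \<le> ((1 + C^2 * \<epsilon>^2) * norm x)^2"
      proof -
        have nn: "0 \<le> (C*\<epsilon>*norm x)^2 + (C^2*\<epsilon>^2*norm x)^2" by simp
        then show ?thesis by (simp add: power2_eq_square algebra_simps)
      qed
      finally show ?thesis by (rule power2_le_imp_le) simp
    qed
    have lo: "norm x \<le> norm (L x)" for x
    proof -
      have "(norm x)^2 \<le> (norm (L x))^2" unfolding nsq by simp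
      then show ?thesis by (rule power2_le_imp_le) simp
    qed
    have "onorm L \<le> 1 + C^2 * \<epsilon>^2" by (rule onorm_le[OF up])
    moreover have "1 \<le> onorm L"
    proof -
      define x :: "real^('d \<times> 'n)" where "x = axis undefined 1"
      have x: "x \<noteq> 0" unfolding x_def by (simp add: axis_eq_0_iff)
      have "norm (L x) / norm x \<le> onorm L" using le_onorm Llin linear_conv_bounded_linear by blast
      moreover have "1 \<le> norm (L x) / norm x" using lo[of x] x by simp
      ultimately show ?thesis by linarith
    qed
    ultimately show ?thesis unfolding SN by simp
  qed
  show ?thesis
    by (intro bigoI[where c = "C^2"] always_eventually allI) (use key in simp)
qed
end
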